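(* Let $N\ge1$, $0\le q<N/2$, let $0<\varepsilon<N/2-q$, and define \[ \phi_0(x):=\begin{cases}|x|^{-N}(-\log|x|)^{-\frac N2-1+\varepsilon}, & |x|<1/e,\\ 0, & |x|\ge 1/e.\end{cases} \] Then (i) $\phi_0\in X_q$ (in particular $\phi_0\in L^1(\mathbb{R}^N)$); (ii) for every $T>0$ there is no constant $\gamma_0>0$ such that $\int_{B(\tau)}\phi_0(x)\,dx\le \gamma_0|\log\tau|^{-N/2}$ for all $0<\tau<T$.
   Context: $X_q:=\{\phi\in L^1_{\rm loc}(\mathbb{R}^N): \int_{\mathbb{R}^N}|\phi|[\log(e+|\phi|)]^q\,dx<\infty\}$; $B(\tau):=\{x\in\mathbb{R}^N: |x|<\tau\}$. *)

theory Defs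
  imports "HOL-Analysis.Analysis"
begin

definition L1_loc :: "('a::euclidean_space \<Rightarrow> real) set" where
  "L1_loc = {\<phi>. \<phi> \<in> borel_measurable lebesgue \<and>
                 (\<forall>K. compact K \<longrightarrow> set_integrable lebesgue K \<phi>)}"

definition X_space :: "real \<Rightarrow> ('a::euclidean_space \<Rightarrow> real) set" where
  "X_space q = {\<phi>. \<phi> \<in> L1_loc \<and>
      (\<integral>\<^sup>+ x. ennreal (\<bar>\<phi> x\<bar> * (ln (exp 1 + \<bar>\<phi> x\<bar>)) powr q) \<partial>lebesgue) < \<infinity>}"

definition phi0 :: "real \<Rightarrow> 'a::euclidean_space \<Rightarrow> real" where
  "phi0 \<epsilon> x = (if norm x < exp (-1)
      then norm x powr (- real DIM('a)) * (- ln (norm x)) powr (- real DIM('a) / 2 - 1 + \<epsilon>)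
      else 0)"

end

theory Submission
  imports Defs "HOL-Real_Asymp.Real_Asymp"
begin


lemma measure_eqI_lessThan':
  fixes M N :: "real measure"
  assumes sets: "sets M = sets borel" "sets N = sets borel"
  assumes fin: "\<And>x. emeasure M {..< x} < \<infinity>"
  assumes "\<And>x. emeasure M {..< x} = emeasure N {..< x}"
  shows "M = N"
proof (rule measure_eqI_generator_eq_countable)
  let ?LT = "\<lambda>a::real. {..< a}" let ?E = "range ?LT"
  show "Int_stable ?E"
  proof -
    have "{..<a} \<inter> {..<b} = {..<min a b}" for a b :: real by auto
    then show ?thesis by (auto simp: Int_stable_def)
  qed
  show "?E \<subseteq> Pow UNIV" "sets M = sigma_sets UNIV ?E" "sets N = sigma_sets UNIV ?E"
    unfolding sets borel_Iio by auto
  have ex: "\<exists>q\<in>\<rat>. x < q" for x :: real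
    using Rats_dense_in_real[of x "x+1"] by auto
  show "?LT`Rats \<subseteq> ?E" "(\<Union>i\<in>Rats. ?LT i) = UNIV" "\<And>a. a \<in> ?LT`Rats \<Longrightarrow> emeasure M a \<noteq> \<infinity>"
    using fin ex by (auto simp: less_top)
qed (auto intro: assms countable_rat)

lemma distr_norm:
  "distr lborel borel (norm :: 'a::euclidean_space \<Rightarrow> real) =
   density lborel (\<lambda>r. ennreal (unit_ball_vol DIM('a) * DIM('a) * r ^ (DIM('a) - 1)) * indicator {0<..} r)"
  (is "?M = ?D")
proof (rule measure_eqI_lessThan')
  fix x :: real
  have e: "emeasure ?M {..<x} = (if x \<le> 0 then 0 else ennreal (unit_ball_vol DIM('a) * x ^ DIM('a)))"
  proof -
    have "emeasure ?M {..<x} = emeasure lborel (ball (0::'a) x)"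
      by (subst emeasure_distr) (auto intro!: arg_cong[where f="emeasure lborel"] simp: ball_def)
    then show ?thesis using emeasure_ball[of x "0::'a"] by (auto simp: ball_empty)
  qed
  then show "emeasure ?M {..<x} < \<infinity>" by auto
  show "emeasure ?M {..<x} = emeasure ?D {..<x}"
  proof (cases "x \<le> 0")
    case True
    have "emeasure ?D {..<x} = (\<integral>\<^sup>+r. ennreal (unit_ball_vol DIM('a) * DIM('a) * r ^ (DIM('a) - 1)) * indicator {0<..} r * indicator {..<x} r \<partial>lborel)"
      by (subst emeasure_density) auto
    also have "\<dots> = (\<integral>\<^sup>+(r::real). 0 \<partial>lborel)"
      by (intro nn_integral_cong) (use True in \<open>auto simp: indicator_def\<close>)
    finally show ?thesis using e True by simp
  next
    case False
    let ?f = "\<lambda>r. unit_ball_vol DIM('a) * DIM('a) * r ^ (DIM('a) - 1)"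
    have "emeasure ?D {..<x} = (\<integral>\<^sup>+r. ennreal (?f r) * indicator {0<..} r * indicator {..<x} r \<partial>lborel)"
      by (subst emeasure_density) auto
    also have "\<dots> = (\<integral>\<^sup>+r. ennreal (?f r) * indicator {0..x} r \<partial>lborel)"
    proof (rule nn_integral_cong_AE)
      show "AE r in lborel. ennreal (?f r) * indicator {0<..} r * indicator {..<x} r = ennreal (?f r) * indicator {0..x} r"
        using AE_lborel_singleton[of 0] AE_lborel_singleton[of x]
        by eventually_elim (auto simp: indicator_def)
    qed
    also have "\<dots> = ennreal (unit_ball_vol DIM('a) * x ^ DIM('a) - unit_ball_vol DIM('a) * 0 ^ DIM('a))"
    proof (rule nn_integral_FTC_Icc[where F="\<lambda>r. unit_ball_vol DIM('a) * r ^ DIM('a)"])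
      show "?f \<in> borel_measurable borel" by measurable
    next
      fix r assume "r \<in> {0..x}"
      show "0 \<le> ?f r" using \<open>r \<in> {0..x}\<close> by auto
      show "DERIV (\<lambda>r. unit_ball_vol DIM('a) * r ^ DIM('a)) r :> ?f r"
        by (auto intro!: derivative_eq_intros simp: DIM_positive)
    qed (use False in auto)
    finally show ?thesis using e False by simp
  qed
qed auto

lemma radial:
  fixes g :: "real \<Rightarrow> ennreal"
  assumes [measurable]: "g \<in> borel_measurable borel"
  shows "(\<integral>\<^sup>+x. g (norm (x::'a::euclidean_space)) \<partial>lborel) =
    (\<integral>\<^sup>+r. ennreal (unit_ball_vol DIM('a) * DIM('a) * r ^ (DIM('a) - 1)) * indicator {0<..} r * g r \<partial>lborel)"
proof -
  have "(\<integral>\<^sup>+x. g (norm (x::'a)) \<partial>lborel) = (\<integral>\<^sup>+r. g r \<partial>distr lborel borel (norm :: 'a \<Rightarrow> real))"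
    by (subst nn_integral_distr) auto
  also have "\<dots> = (\<integral>\<^sup>+r. ennreal (unit_ball_vol DIM('a) * DIM('a) * r ^ (DIM('a) - 1)) * indicator {0<..} r * g r \<partial>lborel)"
    unfolding distr_norm by (subst nn_integral_density) auto
  finally show ?thesis .
qed


lemma oneD:
  fixes b \<tau> :: real
  assumes b: "b > 1" and \<tau>: "0 < \<tau>" "\<tau> \<le> exp (-1)"
  shows "(\<integral>\<^sup>+r. ennreal (indicator {0<..<\<tau>} r * ((- ln r) powr (- b) / r)) \<partial>lborel)
     = ennreal ((- ln \<tau>) powr (1 - b) / (b - 1))"
proof -
  define F where "F r = (- ln r) powr (1 - b) / (b - 1)" for r
  define f where "f r = (- ln r) powr (- b) / r" for r
  have lt: "- ln x > 0" if "0 < x" "x < \<tau>" for x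
  proof -
    have "x < 1" using that \<tau> using exp_less_one_iff[of "-1::real"] by linarith
    then show ?thesis using that ln_less_zero by auto
  qed
  have D: "DERIV F x :> f x" if "0 < x" "x < \<tau>" for x
  proof -
    have l: "- ln x > 0" using lt that by auto
    have "DERIV F x :> (1 - b) * (- ln x) powr (1 - b - 1) * (- (1 / x)) / (b - 1)"
      unfolding F_def using l that b
      by (auto intro!: derivative_eq_intros)
    moreover have "(1 - b) * (- ln x) powr (1 - b - 1) * (- (1 / x)) / (b - 1) = f x"
      unfolding f_def using b that by (simp add: field_simps)
    ultimately show ?thesis by simp
  qed
  have C: "isCont f x" if "0 < x" "x < \<tau>" for x
    unfolding f_def using lt[OF that] that by (auto intro!: continuous_intros)
  have N: "AE x in lborel. ereal 0 < ereal x \<longrightarrow> ereal x < ereal \<tau> \<longrightarrow> 0 \<le> f x"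
    by (auto simp: f_def)
  have A: "((F \<circ> real_of_ereal) \<longlongrightarrow> 0) (at_right (ereal 0))"
    unfolding ereal_tendsto_simps1 F_def using b by real_asymp
  have lt1: "- ln \<tau> > 0"
  proof -
    have "\<tau> < 1" using \<tau> using exp_less_one_iff[of "-1::real"] by linarith
    then show ?thesis using \<tau> ln_less_zero by auto
  qed
  have B: "((F \<circ> real_of_ereal) \<longlongrightarrow> F \<tau>) (at_left (ereal \<tau>))"
    unfolding ereal_tendsto_simps1 F_def using lt1 \<tau> b
    by (intro tendsto_intros) (auto intro!: tendsto_intros)
  have D': "DERIV F x :> f x" if "ereal 0 < ereal x" "ereal x < ereal \<tau>" for x
    using D that by simp
  have C': "isCont f x" if "ereal 0 < ereal x" "ereal x < ereal \<tau>" for x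
    using C that by simp
  have et: "ereal 0 < ereal \<tau>" using \<tau> by simp
  note I = interval_integral_FTC_nonneg[OF et D' C' N A B]
  have "(\<integral>\<^sup>+r. ennreal (indicator {0<..<\<tau>} r * ((- ln r) powr (- b) / r)) \<partial>lborel)
     = (\<integral>\<^sup>+r. ennreal (indicator {0<..<\<tau>} r *\<^sub>R f r) \<partial>lborel)"
    by (simp add: f_def)
  also have "\<dots> = ennreal (LINT r|lborel. indicator {0<..<\<tau>} r *\<^sub>R f r)"
    using I(1) by (intro nn_integral_eq_integral) (auto simp: set_integrable_def f_def indicator_def)
  also have "(LINT r|lborel. indicator {0<..<\<tau>} r *\<^sub>R f r) = F \<tau>"
    using I(2) \<tau> by (simp add: interval_lebesgue_integral_def set_lebesgue_integral_def)
  finally show ?thesis by (simp add: F_def)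
qed




lemma powr_aux: "0 < (r::real) \<Longrightarrow> n \<ge> 1 \<Longrightarrow> r ^ (n - 1) * r powr (- real n) = 1 / r"
proof -
  assume r: "0 < r" and n: "n \<ge> 1"
  have "r ^ (n - 1) = r powr (real n - 1)"
    using r n by (simp add: powr_realpow[symmetric] of_nat_diff)
  moreover have "r powr (real n - 1) * r powr (- real n) = r powr (real n - 1 + - real n)"
    by (rule powr_add[symmetric])
  ultimately have "r ^ (n - 1) * r powr (- real n) = r powr (real n - 1 + - real n)"
    by simp
  also have "\<dots> = r powr (-1)" by simp
  also have "\<dots> = 1 / r" using r by (simp add: powr_minus divide_inverse)
  finally show ?thesis .
qed

lemma ball_int:
  fixes b \<tau> :: real
  assumes b: "b > 1" and \<tau>: "0 < \<tau>" "\<tau> \<le> exp (-1)"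
  shows "(\<integral>\<^sup>+x. ennreal (indicator (ball 0 \<tau>) x * (norm (x::'a::euclidean_space) powr (- real DIM('a)) * (- ln (norm x)) powr (- b))) \<partial>lborel)
     = ennreal (unit_ball_vol DIM('a) * DIM('a) * ((- ln \<tau>) powr (1 - b) / (b - 1)))"
proof -
  let ?g = "\<lambda>r. ennreal (indicator {..<\<tau>} r * (r powr (- real DIM('a)) * (- ln r) powr (- b)))"
  have gm: "?g \<in> borel_measurable borel" by measurable
  have "(\<integral>\<^sup>+x. ennreal (indicator (ball 0 \<tau>) x * (norm (x::'a) powr (- real DIM('a)) * (- ln (norm x)) powr (- b))) \<partial>lborel)
      = (\<integral>\<^sup>+x. ?g (norm (x::'a)) \<partial>lborel)"
    by (intro nn_integral_cong) (simp add: indicator_def)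
  also have "\<dots> = (\<integral>\<^sup>+r. ennreal (unit_ball_vol DIM('a) * DIM('a) * r ^ (DIM('a) - 1)) * indicator {0<..} r * ?g r \<partial>lborel)"
    by (rule radial[OF gm])
  also have "\<dots> = (\<integral>\<^sup>+r. ennreal (unit_ball_vol DIM('a) * DIM('a)) * ennreal (indicator {0<..<\<tau>} r * ((- ln r) powr (- b) / r)) \<partial>lborel)"
  proof (intro nn_integral_cong)
    fix r :: real
    show "ennreal (unit_ball_vol DIM('a) * DIM('a) * r ^ (DIM('a) - 1)) * indicator {0<..} r * ?g r =
      ennreal (unit_ball_vol DIM('a) * DIM('a)) * ennreal (indicator {0<..<\<tau>} r * ((- ln r) powr (- b) / r))"
    proof (cases "0 < r \<and> r < \<tau>")
      case True
      have p: "r ^ (DIM('a) - 1) * r powr (- real DIM('a)) = 1 / r"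
        using True by (intro powr_aux) (auto simp: DIM_positive Suc_le_eq)
      have "ennreal (unit_ball_vol DIM('a) * DIM('a) * r ^ (DIM('a) - 1)) * indicator {0<..} r * ?g r
          = ennreal (unit_ball_vol DIM('a) * DIM('a) * r ^ (DIM('a) - 1) * (r powr (- real DIM('a)) * (- ln r) powr (- b)))"
        using True by (simp add: ennreal_mult'[symmetric] indicator_def)
      also have "unit_ball_vol DIM('a) * DIM('a) * r ^ (DIM('a) - 1) * (r powr (- real DIM('a)) * (- ln r) powr (- b))
          = unit_ball_vol DIM('a) * DIM('a) * ((r ^ (DIM('a) - 1) * r powr (- real DIM('a))) * (- ln r) powr (- b))"
        by (simp add: algebra_simps)
      also have "\<dots> = unit_ball_vol DIM('a) * DIM('a) * (indicator {0<..<\<tau>} r * ((- ln r) powr (- b) / r))"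
        using True p by (simp add: indicator_def)
      finally have X: "ennreal (unit_ball_vol DIM('a) * DIM('a) * r ^ (DIM('a) - 1)) * indicator {0<..} r * ?g r
          = ennreal (unit_ball_vol DIM('a) * DIM('a) * (indicator {0<..<\<tau>} r * ((- ln r) powr (- b) / r)))" .
      have nn: "0 \<le> indicator {0<..<\<tau>} r * ((- ln r) powr (- b) / r)" using True by auto
      show ?thesis unfolding X by (rule ennreal_mult[OF _ nn]) auto
    qed (auto simp: indicator_def)
  qed
  also have "\<dots> = ennreal (unit_ball_vol DIM('a) * DIM('a)) * ennreal ((- ln \<tau>) powr (1 - b) / (b - 1))"
    apply (subst nn_integral_cmult)
     apply measurable
    apply (subst oneD[OF b \<tau>])
    apply (rule refl)
    done
  also have "\<dots> = ennreal (unit_ball_vol DIM('a) * DIM('a) * ((- ln \<tau>) powr (1 - b) / (b - 1)))"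
    using b by (intro ennreal_mult[symmetric]) auto
  finally show ?thesis .
qed

lemma pw:
  fixes r a q N :: real
  assumes r: "0 < r" "r < exp (-1)" and N: "N \<ge> 1" and a: "a \<ge> 0" and q: "q \<ge> 0"
  shows "r powr (- N) * (- ln r) powr (- a) * ln (exp 1 + r powr (- N) * (- ln r) powr (- a)) powr q
    \<le> (N + 1) powr q * (r powr (- N) * (- ln r) powr (q - a))"
proof -
  define L where "L = - ln r"
  have "ln r < ln (exp (-1))" using r by (subst ln_less_cancel_iff) auto
  then have L1: "L > 1" unfolding L_def by simp
  define P where "P = r powr (- N)"
  have P: "P = exp (N * L)" unfolding P_def L_def powr_def using r by simp
  have Pe: "exp 1 \<le> P" unfolding P using L1 N
    by (simp add: mult_mono[of 1 N 1 L, simplified])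
  define u where "u = L powr (- a)"
  have u0: "0 < u" unfolding u_def using L1 by simp
  have u1: "u \<le> 1"
  proof -
    have "1 \<le> L powr a" using L1 a by (intro ge_one_powr_ge_zero) auto
    then show ?thesis unfolding u_def powr_minus using le_imp_inverse_le[of 1 "L powr a"] by simp
  qed
  have P0: "0 < P" unfolding P by simp
  have phiP: "P * u \<le> P" using u1 P0 by (simp add: mult_left_le)
  have l1: "1 \<le> ln (exp 1 + P * u)"
  proof -
    have "ln (exp 1) \<le> ln (exp 1 + P * u)" using P0 u0
      by (subst ln_le_cancel_iff) (auto simp: add_pos_nonneg)
    then show ?thesis by simp
  qed
  have l2: "ln (exp 1 + P * u) \<le> (N + 1) * L"
  proof -
    have "ln (exp 1 + P * u) \<le> ln (2 * P)"
    proof -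
      have "exp 1 + P * u \<le> 2 * P" using Pe phiP by linarith
      then show ?thesis using P0 u0 by (subst ln_le_cancel_iff) (auto simp: add_pos_nonneg)
    qed
    also have "\<dots> = ln 2 + N * L" using P0 by (simp add: ln_mult P)
    also have "ln 2 \<le> (1::real)" using ln_2_less_1 by simp
    then have "ln 2 + N * L \<le> (N + 1) * L" using L1 by (simp add: algebra_simps)
    finally show ?thesis by simp
  qed
  have "ln (exp 1 + P * u) powr q \<le> ((N + 1) * L) powr q"
    using l1 l2 q by (intro powr_mono2) auto
  also have "\<dots> = (N + 1) powr q * L powr q" using N L1 by (simp add: powr_mult)
  finally have lq: "ln (exp 1 + P * u) powr q \<le> (N + 1) powr q * L powr q" .
  have "P * u * ln (exp 1 + P * u) powr q \<le> P * u * ((N + 1) powr q * L powr q)"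
    using lq P0 u0 by (intro mult_left_mono) auto
  also have "\<dots> = (N + 1) powr q * (P * (u * L powr q))" by (simp add: algebra_simps)
  also have "u * L powr q = L powr (q - a)" unfolding u_def by (simp add: powr_add[symmetric])
  finally show ?thesis unfolding P_def u_def L_def .
qed

lemma meas_rad:
  "(\<lambda>x::'a::euclidean_space. indicator (ball 0 t) x * (norm x powr c * (- ln (norm x)) powr d)) \<in> borel_measurable borel"
proof -
  have m1: "(\<lambda>r::real. r powr c * (- ln r) powr d) \<in> borel_measurable borel" by measurable
  have m2: "(\<lambda>x::'a. norm x powr c * (- ln (norm x)) powr d) \<in> borel_measurable borel"
    using measurable_compose[OF borel_measurable_norm m1] by (simp add: o_def)
  have m3: "ball (0::'a) t \<in> sets borel" by simp
  show ?thesis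
    by (intro borel_measurable_times borel_measurable_indicator m2 m3)
qed

theorem lemma4p1:
  fixes q \<epsilon> :: real
  assumes "0 \<le> q" and "q < real DIM('a::euclidean_space) / 2"
    and "0 < \<epsilon>" and "\<epsilon> < real DIM('a) / 2 - q"
  shows "(phi0 \<epsilon> :: 'a \<Rightarrow> real) \<in> X_space q
       \<and> integrable lebesgue (phi0 \<epsilon> :: 'a \<Rightarrow> real)
       \<and> (\<forall>T>0. \<not> (\<exists>\<gamma>0>0. \<forall>\<tau>. 0 < \<tau> \<and> \<tau> < T \<and> \<tau> \<noteq> 1 \<longrightarrow>
             (LINT x:ball 0 \<tau>|lebesgue. (phi0 \<epsilon> :: 'a \<Rightarrow> real) x)
               \<le> \<gamma>0 * \<bar>ln \<tau>\<bar> powr (- real DIM('a) / 2)))"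
proof -
  note q0 = assms(1) and \<epsilon>0 = assms(3) and \<epsilon>q = assms(4)
  define N where "N = real DIM('a)"
  have N1: "N \<ge> 1" unfolding N_def using DIM_positive[where 'a='a] by linarith
  define V where "V = unit_ball_vol DIM('a)"
  have V0: "V > 0" unfolding V_def by simp
  define a where "a = N / 2 + 1 - \<epsilon>"
  have a1: "a > 1" and aq1: "a - q > 1" using \<epsilon>q q0 unfolding a_def N_def by auto
  have ma: "- N / 2 - 1 + \<epsilon> = - a" unfolding a_def by simp
  have phi_eq: "phi0 \<epsilon> x = indicator (ball 0 (exp (-1))) x * (norm x powr (- N) * (- ln (norm x)) powr (- a))" for x :: 'a
    unfolding phi0_def ma[unfolded N_def] N_def by (simp add: indicator_def)
  have meas: "(phi0 \<epsilon> :: 'a \<Rightarrow> real) \<in> borel_measurable borel"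
  proof -
    have m1: "(\<lambda>r::real. r powr (- N) * (- ln r) powr (- a)) \<in> borel_measurable borel" by measurable
    have m2: "(\<lambda>x::'a. norm x powr (- N) * (- ln (norm x)) powr (- a)) \<in> borel_measurable borel"
      using measurable_compose[OF borel_measurable_norm m1] by (simp add: o_def)
    have m3: "ball (0::'a) (exp (-1)) \<in> sets borel" by simp
    show ?thesis unfolding phi_eq[abs_def]
      by (intro borel_measurable_times borel_measurable_indicator m2 m3)
  qed
  have nn: "0 \<le> phi0 \<epsilon> x" for x :: 'a unfolding phi_eq by (simp add: indicator_def)
  have e1: "0 < exp (-1::real)" "exp (-1::real) \<le> exp (-1)" by auto
  have fin: "(\<integral>\<^sup>+x. ennreal (norm (phi0 \<epsilon> x)) \<partial>(lborel :: 'a measure)) < \<infinity>"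
  proof -
    have "(\<integral>\<^sup>+x. ennreal (norm (phi0 \<epsilon> x)) \<partial>(lborel :: 'a measure))
      = (\<integral>\<^sup>+x. ennreal (indicator (ball 0 (exp (-1))) x * (norm (x::'a) powr (- real DIM('a)) * (- ln (norm x)) powr (- a))) \<partial>lborel)"
      by (intro nn_integral_cong) (metis nn phi_eq N_def real_norm_def abs_of_nonneg)
    also have "\<dots> = ennreal (V * DIM('a) * ((- ln (exp (-1))) powr (1 - a) / (a - 1)))"
      unfolding V_def by (rule ball_int[OF a1 e1])
    finally show ?thesis by simp
  qed
  have intb: "integrable lborel (phi0 \<epsilon> :: 'a \<Rightarrow> real)"
    by (rule integrableI_bounded[OF _ fin]) (use meas in simp)
  have intl: "integrable lebesgue (phi0 \<epsilon> :: 'a \<Rightarrow> real)"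
    using intb meas by (simp add: integrable_completion)
  have measl: "(phi0 \<epsilon> :: 'a \<Rightarrow> real) \<in> borel_measurable lebesgue"
    using meas by (simp add: measurable_completion)
  have L1: "(phi0 \<epsilon> :: 'a \<Rightarrow> real) \<in> L1_loc"
    unfolding L1_loc_def
  proof (safe intro!: measl)
    fix K :: "'a set" assume "compact K"
    then have "K \<in> sets lborel" using compact_imp_closed borel_closed by auto
    then have "K \<in> sets lebesgue" by (rule sets_completionI_sets)
    then show "set_integrable lebesgue K (phi0 \<epsilon>)"
      unfolding set_integrable_def using intl by (rule integrable_mult_indicator)
  qed
  have pwb: "ennreal (\<bar>phi0 \<epsilon> x\<bar> * ln (exp 1 + \<bar>phi0 \<epsilon> x\<bar>) powr q) \<le>
     ennreal ((N + 1) powr q) * ennreal (indicator (ball 0 (exp (-1))) x * (norm x powr (- real DIM('a)) * (- ln (norm x)) powr (- (a - q))))"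
    for x :: 'a
  proof (cases "x \<in> ball 0 (exp (-1)) \<and> x \<noteq> 0")
    case True
    then have r: "0 < norm x" "norm x < exp (-1)" by auto
    have "\<bar>phi0 \<epsilon> x\<bar> * ln (exp 1 + \<bar>phi0 \<epsilon> x\<bar>) powr q =
       norm x powr (- N) * (- ln (norm x)) powr (- a) * ln (exp 1 + norm x powr (- N) * (- ln (norm x)) powr (- a)) powr q"
      using True nn[of x] by (simp add: phi_eq)
    also have "\<dots> \<le> (N + 1) powr q * (norm x powr (- N) * (- ln (norm x)) powr (q - a))"
      using a1 q0 N1 r by (intro pw) auto
    also have "\<dots> = (N + 1) powr q * (indicator (ball 0 (exp (-1))) x * (norm x powr (- real DIM('a)) * (- ln (norm x)) powr (- (a - q))))"
      using True by (simp add: N_def)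
    finally have le: "\<bar>phi0 \<epsilon> x\<bar> * ln (exp 1 + \<bar>phi0 \<epsilon> x\<bar>) powr q \<le> (N + 1) powr q * (indicator (ball 0 (exp (-1))) x * (norm x powr (- real DIM('a)) * (- ln (norm x)) powr (- (a - q))))" .
    have "ennreal (\<bar>phi0 \<epsilon> x\<bar> * ln (exp 1 + \<bar>phi0 \<epsilon> x\<bar>) powr q) \<le> ennreal ((N + 1) powr q * (indicator (ball 0 (exp (-1))) x * (norm x powr (- real DIM('a)) * (- ln (norm x)) powr (- (a - q)))))"
      using le by (rule ennreal_leI)
    also have "\<dots> = ennreal ((N + 1) powr q) * ennreal (indicator (ball 0 (exp (-1))) x * (norm x powr (- real DIM('a)) * (- ln (norm x)) powr (- (a - q))))"
      by (rule ennreal_mult) auto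
    finally show ?thesis .
  next
    case False
    then have "phi0 \<epsilon> x = 0" unfolding phi_eq by (auto simp: indicator_def)
    then show ?thesis by simp
  qed
  have orl: "(\<integral>\<^sup>+ x. ennreal (\<bar>phi0 \<epsilon> x\<bar> * (ln (exp 1 + \<bar>phi0 \<epsilon> x\<bar>)) powr q) \<partial>(lebesgue :: 'a measure)) < \<infinity>"
  proof -
    have "(\<integral>\<^sup>+ x. ennreal (\<bar>phi0 \<epsilon> x\<bar> * (ln (exp 1 + \<bar>phi0 \<epsilon> x\<bar>)) powr q) \<partial>(lebesgue :: 'a measure))
      = (\<integral>\<^sup>+ x. ennreal (\<bar>phi0 \<epsilon> x\<bar> * (ln (exp 1 + \<bar>phi0 \<epsilon> x\<bar>)) powr q) \<partial>(lborel :: 'a measure))"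
      by (rule nn_integral_completion)
    also have "\<dots> \<le> (\<integral>\<^sup>+ x. ennreal ((N + 1) powr q) * ennreal (indicator (ball 0 (exp (-1))) x * (norm x powr (- real DIM('a)) * (- ln (norm x)) powr (- (a - q)))) \<partial>(lborel :: 'a measure))"
      by (intro nn_integral_mono pwb)
    also have "\<dots> = ennreal ((N + 1) powr q) * (\<integral>\<^sup>+ x. ennreal (indicator (ball 0 (exp (-1))) x * (norm (x::'a) powr (- real DIM('a)) * (- ln (norm x)) powr (- (a - q)))) \<partial>lborel)"
      by (rule nn_integral_cmult) (use meas_rad in simp)
    also have "\<dots> = ennreal ((N + 1) powr q) * ennreal (V * DIM('a) * ((- ln (exp (-1))) powr (1 - (a - q)) / ((a - q) - 1)))"
      unfolding V_def by (subst ball_int[OF aq1 e1]) (rule refl)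
    also have "\<dots> < \<infinity>" by (simp add: ennreal_mult_less_top)
    finally show ?thesis .
  qed
  have X: "(phi0 \<epsilon> :: 'a \<Rightarrow> real) \<in> X_space q"
    unfolding X_space_def using L1 orl by simp
  have Ival: "(LINT x:ball 0 \<tau>|lebesgue. (phi0 \<epsilon> :: 'a \<Rightarrow> real) x) = V * N * ((- ln \<tau>) powr (1 - a) / (a - 1))"
    if \<tau>: "0 < \<tau>" "\<tau> \<le> exp (-1)" for \<tau>
  proof -
    have eqi: "indicator (ball 0 \<tau>) x *\<^sub>R phi0 \<epsilon> x = indicator (ball 0 \<tau>) x * (norm x powr (- real DIM('a)) * (- ln (norm x)) powr (- a))" for x :: 'a
      using \<tau> by (auto simp: phi_eq indicator_def N_def)
    have m2: "(\<lambda>x::'a. indicator (ball 0 \<tau>) x *\<^sub>R phi0 \<epsilon> x) \<in> borel_measurable borel"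
      by (intro borel_measurable_scaleR borel_measurable_indicator meas) simp
    have "(LINT x:ball 0 \<tau>|lebesgue. (phi0 \<epsilon> :: 'a \<Rightarrow> real) x) = (LINT x|lborel. indicator (ball 0 \<tau>) x *\<^sub>R (phi0 \<epsilon> :: 'a \<Rightarrow> real) x)"
      unfolding set_lebesgue_integral_def using m2 by (simp add: integral_completion)
    also have "\<dots> = enn2real (\<integral>\<^sup>+x. ennreal (indicator (ball 0 \<tau>) x * (norm (x::'a) powr (- real DIM('a)) * (- ln (norm x)) powr (- a))) \<partial>lborel)"
    proof (rule enn2real_nn_integral_eq_integral[symmetric])
      show "AE x in lborel. ennreal (indicator (ball 0 \<tau>) x * (norm (x::'a) powr (- real DIM('a)) * (- ln (norm x)) powr (- a))) = ennreal (indicator (ball 0 \<tau>) x *\<^sub>R phi0 \<epsilon> x)"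
        by (intro AE_I2) (simp only: eqi)
      show "AE x in lborel. 0 \<le> indicator (ball 0 \<tau>) x *\<^sub>R phi0 \<epsilon> (x::'a)"
        using nn by (intro AE_I2) simp
    qed (use m2 in simp)
    also have "\<dots> = V * N * ((- ln \<tau>) powr (1 - a) / (a - 1))"
      unfolding ball_int[OF a1 \<tau>] V_def N_def using a1 by simp
    finally show ?thesis .
  qed
  have ii: "\<not> (\<exists>\<gamma>0>0. \<forall>\<tau>. 0 < \<tau> \<and> \<tau> < T \<and> \<tau> \<noteq> 1 \<longrightarrow>
             (LINT x:ball 0 \<tau>|lebesgue. (phi0 \<epsilon> :: 'a \<Rightarrow> real) x)
               \<le> \<gamma>0 * \<bar>ln \<tau>\<bar> powr (- real DIM('a) / 2))" if T: "T > 0" for T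
  proof
    assume "\<exists>\<gamma>0>0. \<forall>\<tau>. 0 < \<tau> \<and> \<tau> < T \<and> \<tau> \<noteq> 1 \<longrightarrow>
             (LINT x:ball 0 \<tau>|lebesgue. (phi0 \<epsilon> :: 'a \<Rightarrow> real) x)
               \<le> \<gamma>0 * \<bar>ln \<tau>\<bar> powr (- real DIM('a) / 2)"
    then obtain g where g0: "g > 0" and H: "\<And>\<tau>. 0 < \<tau> \<Longrightarrow> \<tau> < T \<Longrightarrow> \<tau> \<noteq> 1 \<Longrightarrow>
             (LINT x:ball 0 \<tau>|lebesgue. (phi0 \<epsilon> :: 'a \<Rightarrow> real) x) \<le> g * \<bar>ln \<tau>\<bar> powr (- N / 2)"
      unfolding N_def by blast
    define K where "K = g * (a - 1) / (V * N)"
    have K0: "K > 0" unfolding K_def using g0 a1 V0 N1 by simp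
    define L where "L = max 2 (max (- ln T + 1) (K powr (1 / \<epsilon>) + 1))"
    have L2: "L \<ge> 2" and LT: "L > - ln T" and LK: "L > K powr (1 / \<epsilon>)" unfolding L_def by auto
    define \<tau> where "\<tau> = exp (- L)"
    have t0: "0 < \<tau>" unfolding \<tau>_def by simp
    have te: "\<tau> \<le> exp (-1)" unfolding \<tau>_def using L2 by simp
    have tT: "\<tau> < T" unfolding \<tau>_def using LT T
      by (metis exp_less_cancel_iff exp_ln minus_less_iff)
    have t1: "\<tau> \<noteq> 1" unfolding \<tau>_def using L2 by simp
    have lnt: "- ln \<tau> = L" "\<bar>ln \<tau>\<bar> = L" unfolding \<tau>_def using L2 by auto
    have "V * N * (L powr (1 - a) / (a - 1)) \<le> g * L powr (- N / 2)"
      using H[OF t0 tT t1] Ival[OF t0 te] lnt by simp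
    moreover have "1 - a = \<epsilon> + (- N / 2)" unfolding a_def by simp
    ultimately have "V * N * (L powr \<epsilon> * L powr (- N / 2)) / (a - 1) \<le> g * L powr (- N / 2)"
      using L2 powr_add[of L \<epsilon> "- (N / 2)"] by simp
    moreover have "V * N * (L powr \<epsilon> * L powr (- N / 2)) / (a - 1) = (V * N * L powr \<epsilon> / (a - 1)) * L powr (- N / 2)"
      by simp
    ultimately have "(V * N * L powr \<epsilon> / (a - 1)) * L powr (- N / 2) \<le> g * L powr (- N / 2)" by simp
    moreover have "0 < L powr (- N / 2)" using L2 by simp
    ultimately have "V * N * L powr \<epsilon> / (a - 1) \<le> g"
      using mult_right_le_imp_le by blast
    then have "L powr \<epsilon> \<le> K" unfolding K_def using V0 N1 a1 by (simp add: field_simps)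
    moreover have "K < L powr \<epsilon>"
    proof -
      have "K = (K powr (1 / \<epsilon>)) powr \<epsilon>" using K0 \<epsilon>0 by (simp add: powr_powr)
      also have "\<dots> < L powr \<epsilon>" using LK K0 \<epsilon>0 by (intro powr_less_mono2) auto
      finally show ?thesis .
    qed
    ultimately show False by simp
  qed
  show ?thesis using X intl ii by blast
qed


end
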